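(* Let $V\subseteq\{0,1\}^n$ be nonempty and let $\preceq$ be the lexicographic term order with $x_1\succ x_2\succ\cdots\succ x_n$. Then \[ \mathcal{S}_{\mathsf{lex}}(V)=\mathcal{S}_{\mathsf{lex}}(V^0)\cup\mathcal{S}_{\mathsf{lex}}(V^1)\cup\big(n\ast(\mathcal{S}_{\mathsf{lex}}(V^0)\cap\mathcal{S}_{\mathsf{lex}}(V^1))\big). \]
   Context: For $a\in\{0,1\}$, $V^a=\{v\in\{0,1\}^{n-1}:(v,a)\in V\}$. For $W\subseteq\{0,1\}^k$, $\mathcal{S}_{\mathsf{lex}}(W)=\{\tau\subseteq[k]:\prod_{i\in\tau}x_i\notin\mathrm{in}(I(W))\}$, where $I(W)\subseteq\mathbb{R}[x_1,\dots,x_k]$ is the vanishing ideal and the initial ideal is with respect to lexicographic order $x_1\succ\cdots\succ x_k$ (so $\mathcal{S}_{\mathsf{lex}}(\emptyset)=\emptyset$). For a collection $K$ of subsets of $[n-1]$, $n\ast K=K\cup\{\sigma\cup\{n\}:\sigma\in K\}$. *)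

theory Defs
  imports Complex_Main "HOL-Library.Poly_Mapping"
begin

text \<open>Multivariate real polynomials: finitely supported maps from monomials
(exponent vectors, nat \<Rightarrow>0 nat, variable i is x_i) to real coefficients.\<close>

type_synonym monom = "nat \<Rightarrow>\<^sub>0 nat"
type_synonym mpoly = "monom \<Rightarrow>\<^sub>0 real"

definition in_ring :: "nat \<Rightarrow> mpoly \<Rightarrow> bool" where
  "in_ring k f \<longleftrightarrow> (\<forall>m\<in>Poly_Mapping.keys f. Poly_Mapping.keys m \<subseteq> {1..k})"

text \<open>A 0/1 point of {0,1}^k is a bool list of length k; coordinate i (1-based) is v!(i-1).\<close>
definition pt :: "bool list \<Rightarrow> nat \<Rightarrow> real" where
  "pt v i = (if v ! (i - 1) then 1 else 0)"

definition eval_mpoly :: "mpoly \<Rightarrow> bool list \<Rightarrow> real" where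
  "eval_mpoly f v = (\<Sum>m\<in>Poly_Mapping.keys f. Poly_Mapping.lookup f m * (\<Prod>i\<in>Poly_Mapping.keys m. pt v i ^ Poly_Mapping.lookup m i))"

definition van_ideal :: "nat \<Rightarrow> bool list set \<Rightarrow> mpoly set" where
  "van_ideal k W = {f. in_ring k f \<and> (\<forall>w\<in>W. eval_mpoly f w = 0)}"

definition gen_ideal :: "nat \<Rightarrow> mpoly set \<Rightarrow> mpoly set" where
  "gen_ideal k G = {p. \<exists>H q. finite H \<and> H \<subseteq> G \<and> (\<forall>h\<in>H. in_ring k (q h))
                          \<and> p = (\<Sum>h\<in>H. q h * h)}"

definition lex_less :: "monom \<Rightarrow> monom \<Rightarrow> bool" where
  "lex_less m1 m2 \<longleftrightarrow> (\<exists>i. Poly_Mapping.lookup m1 i < Poly_Mapping.lookup m2 i \<and> (\<forall>j<i. Poly_Mapping.lookup m1 j = Poly_Mapping.lookup m2 j))"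

definition lead_monom :: "mpoly \<Rightarrow> monom" where
  "lead_monom f = (THE m. m \<in> Poly_Mapping.keys f \<and> (\<forall>m'\<in>Poly_Mapping.keys f. m' = m \<or> lex_less m' m))"

definition lead_term :: "mpoly \<Rightarrow> mpoly" where
  "lead_term f = Poly_Mapping.single (lead_monom f) (Poly_Mapping.lookup f (lead_monom f))"

definition init_ideal :: "nat \<Rightarrow> mpoly set \<Rightarrow> mpoly set" where
  "init_ideal k I = gen_ideal k {lead_term f | f. f \<in> I \<and> f \<noteq> 0}"

definition sqfree_monom :: "nat set \<Rightarrow> mpoly" where
  "sqfree_monom \<tau> = Poly_Mapping.single (\<Sum>i\<in>\<tau>. Poly_Mapping.single i 1) 1"

definition S_lex :: "nat \<Rightarrow> bool list set \<Rightarrow> nat set set" where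
  "S_lex k W = {\<tau>. \<tau> \<subseteq> {1..k} \<and> sqfree_monom \<tau> \<notin> init_ideal k (van_ideal k W)}"

definition restr :: "bool list set \<Rightarrow> bool \<Rightarrow> bool list set" where
  "restr V a = {v. v @ [a] \<in> V}"

definition cone :: "nat \<Rightarrow> nat set set \<Rightarrow> nat set set" where
  "cone n K = K \<union> {\<sigma> \<union> {n} | \<sigma>. \<sigma> \<in> K}"

end

theory Submission
  imports Defs
begin

abbreviation lk :: "('a \<Rightarrow>\<^sub>0 'b::zero) \<Rightarrow> 'a \<Rightarrow> 'b" where "lk \<equiv> Poly_Mapping.lookup"
abbreviation ks :: "('a \<Rightarrow>\<^sub>0 'b::zero) \<Rightarrow> 'a set" where "ks \<equiv> Poly_Mapping.keys"
abbreviation sg :: "'a \<Rightarrow> 'b \<Rightarrow> ('a \<Rightarrow>\<^sub>0 'b::zero)" where "sg \<equiv> Poly_Mapping.single"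

lemma lex_irrefl: "\<not> lex_less m m"
  unfolding lex_less_def by auto

lemma lex_trans: assumes "lex_less a b" "lex_less b c" shows "lex_less a c"
proof -
  obtain i where i: "lk a i < lk b i" "\<forall>j<i. lk a j = lk b j" using assms(1) unfolding lex_less_def by auto
  obtain k where k: "lk b k < lk c k" "\<forall>j<k. lk b j = lk c j" using assms(2) unfolding lex_less_def by auto
  show ?thesis unfolding lex_less_def
  proof (cases "i < k")
    case True
    then show "\<exists>i. lk a i < lk c i \<and> (\<forall>j<i. lk a j = lk c j)" using i k by (intro exI[of _ i]) auto
  next
    case False
    then show "\<exists>i. lk a i < lk c i \<and> (\<forall>j<i. lk a j = lk c j)" using i k
      by (intro exI[of _ k]) (metis linorder_neqE_nat not_less order.strict_trans)
  qed
qed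

lemma lex_asym: "lex_less a b \<Longrightarrow> \<not> lex_less b a"
  using lex_trans lex_irrefl by blast

lemma lex_total: assumes "m \<noteq> m'" shows "lex_less m m' \<or> lex_less m' m"
proof -
  have "\<exists>i. lk m i \<noteq> lk m' i"
  proof (rule ccontr)
    assume "\<not> (\<exists>i. lk m i \<noteq> lk m' i)"
    then have "m = m'" by (intro poly_mapping_eqI) auto
    then show False using assms by simp
  qed
  define i where "i = (LEAST i. lk m i \<noteq> lk m' i)"
  have i1: "lk m i \<noteq> lk m' i" unfolding i_def by (rule LeastI_ex) fact
  have i2: "\<forall>j<i. lk m j = lk m' j"
  proof (intro allI impI)
    fix j assume "j < i"
    then show "lk m j = lk m' j" using not_less_Least[of j "\<lambda>i. lk m i \<noteq> lk m' i"] unfolding i_def by blast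
  qed
  show ?thesis
  proof (cases "lk m i < lk m' i")
    case True then show ?thesis unfolding lex_less_def using i2 by auto
  next
    case False then have "lk m' i < lk m i" using i1 by auto
    then show ?thesis unfolding lex_less_def using i2 by (intro disjI2 exI[of _ i]) auto
  qed
qed

lemma lex_add: "lex_less a b \<Longrightarrow> lex_less (c + a) (c + b)"
  unfolding lex_less_def by (auto simp: lookup_add)

lemma max_ex: "finite K \<Longrightarrow> K \<noteq> {} \<Longrightarrow> \<exists>m\<in>K. \<forall>m'\<in>K. m' = m \<or> lex_less m' m"
proof (induction K rule: finite_ne_induct)
  case (singleton x) then show ?case by auto
next
  case (insert x F)
  then obtain m where m: "m \<in> F" "\<forall>m'\<in>F. m' = m \<or> lex_less m' m" by auto
  show ?case
  proof (cases "lex_less m x")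
    case True
    have "\<forall>m'\<in>insert x F. m' = x \<or> lex_less m' x"
    proof
      fix m' assume "m' \<in> insert x F"
      then show "m' = x \<or> lex_less m' x" using m True lex_trans[of m' m x] by fastforce
    qed
    then show ?thesis by blast
  next
    case False then have "x = m \<or> lex_less x m" using lex_total by blast
    then show ?thesis using m by auto
  qed
qed

lemma lm_char: assumes "m \<in> ks f" "\<forall>m'\<in>ks f. m' \<noteq> m \<longrightarrow> lex_less m' m"
  shows "lead_monom f = m"
  unfolding lead_monom_def
proof (rule the_equality)
  show "m \<in> ks f \<and> (\<forall>m'\<in>ks f. m' = m \<or> lex_less m' m)" using assms by auto
next
  fix x assume H: "x \<in> ks f \<and> (\<forall>m'\<in>ks f. m' = x \<or> lex_less m' x)"
  have 1: "m = x \<or> lex_less m x" using H assms(1) by blast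
  have 2: "x \<noteq> m \<Longrightarrow> lex_less x m" using assms(2) H by blast
  show "x = m" using 1 2 lex_asym by blast
qed

lemma lm_prop: assumes "f \<noteq> 0"
  shows "lead_monom f \<in> ks f" "\<And>m'. m' \<in> ks f \<Longrightarrow> m' \<noteq> lead_monom f \<Longrightarrow> lex_less m' (lead_monom f)"
proof -
  obtain m where m: "m \<in> ks f" "\<forall>m'\<in>ks f. m' = m \<or> lex_less m' m"
    using max_ex[of "ks f"] assms by auto
  have "lead_monom f = m" using m by (intro lm_char) auto
  then show "lead_monom f \<in> ks f" "\<And>m'. m' \<in> ks f \<Longrightarrow> m' \<noteq> lead_monom f \<Longrightarrow> lex_less m' (lead_monom f)"
    using m by auto
qed

lemma lm_add_lower: assumes "p \<noteq> 0" "\<And>m. m \<in> ks q \<Longrightarrow> lex_less m (lead_monom p)"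
  shows "p + q \<noteq> 0" "lead_monom (p + q) = lead_monom p"
proof -
  let ?M = "lead_monom p"
  have "?M \<notin> ks q" using assms(2)[of ?M] lex_irrefl[of ?M] by blast
  then have "lk (p + q) ?M = lk p ?M" by (simp add: lookup_add in_keys_iff)
  then have M: "?M \<in> ks (p + q)" using lm_prop(1)[OF assms(1)] by (simp add: in_keys_iff)
  then show "p + q \<noteq> 0" by auto
  show "lead_monom (p + q) = ?M"
  proof (rule lm_char[OF M], intro ballI impI)
    fix m assume m: "m \<in> ks (p + q)" "m \<noteq> ?M"
    have "m \<in> ks p \<or> m \<in> ks q" using keys_add[of p q] m(1) by blast
    then show "lex_less m ?M"
    proof
      assume "m \<in> ks p" then show ?thesis using lm_prop(2)[OF assms(1)] m(2) by simp
    next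
      assume "m \<in> ks q" then show ?thesis using assms(2) by simp
    qed
  qed
qed


definition mon :: "monom \<Rightarrow> bool list \<Rightarrow> real" where
  "mon m v = (\<Prod>i\<in>ks m. pt v i ^ lk m i)"

lemma mon_superset: "finite S \<Longrightarrow> ks m \<subseteq> S \<Longrightarrow> mon m v = (\<Prod>i\<in>S. pt v i ^ lk m i)"
  unfolding mon_def by (rule prod.mono_neutral_left) (auto simp: in_keys_iff)

lemma mon_add: "mon (a + b) v = mon a v * mon b v"
proof -
  let ?S = "ks a \<union> ks b"
  have f: "finite ?S" by simp
  have sub: "ks (a + b) \<subseteq> ?S" by (rule keys_add)
  have "mon (a + b) v = (\<Prod>i\<in>?S. pt v i ^ lk (a + b) i)" using sub by (rule mon_superset[OF f])
  also have "\<dots> = (\<Prod>i\<in>?S. pt v i ^ lk a i * pt v i ^ lk b i)" by (simp add: lookup_add power_add)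
  also have "\<dots> = (\<Prod>i\<in>?S. pt v i ^ lk a i) * (\<Prod>i\<in>?S. pt v i ^ lk b i)" by (rule prod.distrib)
  also have "\<dots> = mon a v * mon b v" using mon_superset[OF f, of a v] mon_superset[OF f, of b v] by simp
  finally show ?thesis .
qed

lemma eval_superset: "finite S \<Longrightarrow> ks f \<subseteq> S \<Longrightarrow> eval_mpoly f v = (\<Sum>m\<in>S. lk f m * mon m v)"
  unfolding eval_mpoly_def mon_def[symmetric] by (rule sum.mono_neutral_left) (auto simp: in_keys_iff)

lemma eval_add: "eval_mpoly (f + g) v = eval_mpoly f v + eval_mpoly g v"
proof -
  let ?S = "ks f \<union> ks g"
  have f: "finite ?S" by simp
  have "eval_mpoly (f + g) v = (\<Sum>m\<in>?S. lk (f + g) m * mon m v)" using keys_add[of f g] by (intro eval_superset f)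
  also have "\<dots> = (\<Sum>m\<in>?S. lk f m * mon m v) + (\<Sum>m\<in>?S. lk g m * mon m v)"
    by (simp add: lookup_add distrib_right sum.distrib)
  also have "\<dots> = eval_mpoly f v + eval_mpoly g v" using eval_superset[OF f, of f v] eval_superset[OF f, of g v] by simp
  finally show ?thesis .
qed

lemma eval_diff: "eval_mpoly (f - g) v = eval_mpoly f v - eval_mpoly g v"
proof -
  let ?S = "ks f \<union> ks g"
  have f: "finite ?S" by simp
  have "eval_mpoly (f - g) v = (\<Sum>m\<in>?S. lk (f - g) m * mon m v)" using keys_diff[of f g] by (intro eval_superset f)
  also have "\<dots> = (\<Sum>m\<in>?S. lk f m * mon m v) - (\<Sum>m\<in>?S. lk g m * mon m v)"
    by (simp add: lookup_minus left_diff_distrib sum_subtractf)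
  also have "\<dots> = eval_mpoly f v - eval_mpoly g v" using eval_superset[OF f, of f v] eval_superset[OF f, of g v] by simp
  finally show ?thesis .
qed

lemma eval_zero: "eval_mpoly 0 v = 0"
  unfolding eval_mpoly_def by simp

lemma eval_single: "eval_mpoly (sg m c) v = c * mon m v"
  by (cases "c = 0") (simp_all add: eval_mpoly_def mon_def eval_zero)

lemma eval_sum: "finite A \<Longrightarrow> eval_mpoly (\<Sum>a\<in>A. F a) v = (\<Sum>a\<in>A. eval_mpoly (F a) v)"
  by (induction A rule: finite_induct) (simp_all add: eval_zero eval_add)

lemma poly_expand: "f = (\<Sum>m\<in>ks f. sg m (lk f m))"
proof (rule poly_mapping_eqI)
  fix k
  have "lk (\<Sum>m\<in>ks f. sg m (lk f m)) k = (\<Sum>m\<in>ks f. if m = k then lk f m else 0)"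
    by (simp add: lookup_sum lookup_single when_def)
  also have "\<dots> = lk f k" by (cases "k \<in> ks f") (simp_all add: in_keys_iff)
  finally show "lk f k = lk (\<Sum>m\<in>ks f. sg m (lk f m)) k" by simp
qed

lemma mult_single_expand: "sg b c * f = (\<Sum>m\<in>ks f. sg (b + m) (c * lk f m))"
proof -
  have "sg b c * f = sg b c * (\<Sum>m\<in>ks f. sg m (lk f m))"
    by (rule arg_cong[where f="\<lambda>x. sg b c * x"], rule poly_expand)
  also have "\<dots> = (\<Sum>m\<in>ks f. sg (b + m) (c * lk f m))"
    by (simp add: sum_distrib_left mult_single)
  finally show ?thesis .
qed

lemma monom_add_cancel: "((b::monom) + x = b + m) = (x = m)"
proof
  assume "b + x = b + m"
  then have "\<And>i. lk (b + x) i = lk (b + m) i" by simp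
  then show "x = m" by (intro poly_mapping_eqI) (simp add: lookup_add)
qed simp

lemma lookup_mult_single: "lk (sg b c * (f::mpoly)) (b + m) = c * lk f m"
proof -
  have "lk (sg b c * f) (b + m) = (\<Sum>m'\<in>ks f. if m' = m then c * lk f m' else 0)"
    by (simp add: mult_single_expand lookup_sum lookup_single when_def monom_add_cancel)
  also have "\<dots> = c * lk f m" by (cases "m \<in> ks f") (simp_all add: in_keys_iff)
  finally show ?thesis .
qed

lemma keys_mult_single: "ks (sg b c * (f::mpoly)) \<subseteq> (+) b ` ks f"
proof
  fix x assume "x \<in> ks (sg b c * f)"
  then obtain a b' where "x = a + b'" "a \<in> ks (sg b c)" "b' \<in> ks f" using keys_mult[of "sg b c" f] by blast
  then show "x \<in> (+) b ` ks f" by (cases "c = 0") auto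
qed

lemma lm_mult_single: assumes "c \<noteq> 0" "f \<noteq> 0"
  shows "sg b c * f \<noteq> 0" "lead_monom (sg b c * f) = b + lead_monom f"
proof -
  let ?M = "b + lead_monom f"
  have "lk (sg b c * f) ?M = c * lk f (lead_monom f)" by (rule lookup_mult_single)
  then have M: "?M \<in> ks (sg b c * f)" using lm_prop(1)[OF assms(2)] assms(1) by (simp add: in_keys_iff)
  then show "sg b c * f \<noteq> 0" by auto
  show "lead_monom (sg b c * f) = ?M"
  proof (rule lm_char[OF M], intro ballI impI)
    fix m' assume m': "m' \<in> ks (sg b c * f)" "m' \<noteq> ?M"
    then obtain m where m: "m' = b + m" "m \<in> ks f" using keys_mult_single by blast
    then have "m \<noteq> lead_monom f" using m' by auto
    then have "lex_less m (lead_monom f)" using lm_prop(2)[OF assms(2) m(2)] by simp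
    then show "lex_less m' ?M" unfolding m(1) by (rule lex_add)
  qed
qed

lemma eval_mult_single: "eval_mpoly (sg b c * f) v = c * mon b v * eval_mpoly f v"
proof -
  have "eval_mpoly (sg b c * f) v = (\<Sum>m\<in>ks f. eval_mpoly (sg (b + m) (c * lk f m)) v)"
    by (simp add: mult_single_expand eval_sum)
  also have "\<dots> = (\<Sum>m\<in>ks f. c * mon b v * (lk f m * mon m v))"
    by (simp add: eval_single mon_add mult_ac)
  also have "\<dots> = c * mon b v * eval_mpoly f v"
    by (simp add: sum_distrib_left eval_superset[of "ks f" f v])
  finally show ?thesis .
qed

lemma in_ring_add: "in_ring k f \<Longrightarrow> in_ring k g \<Longrightarrow> in_ring k (f + g)"
  unfolding in_ring_def using keys_add[of f g] by blast

lemma in_ring_diff: "in_ring k f \<Longrightarrow> in_ring k g \<Longrightarrow> in_ring k (f - g)"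
  unfolding in_ring_def using keys_diff[of f g] by blast

lemma in_ring_mono: "k \<le> k' \<Longrightarrow> in_ring k f \<Longrightarrow> in_ring k' f"
  unfolding in_ring_def by fastforce

lemma in_ring_mult_single: assumes "ks b \<subseteq> {1..k}" "in_ring k f" shows "in_ring k (sg b c * f)"
  unfolding in_ring_def
proof
  fix x assume "x \<in> ks (sg b c * f)"
  then obtain m where m: "x = b + m" "m \<in> ks f" using keys_mult_single by blast
  have "ks m \<subseteq> {1..k}" using assms(2) m(2) unfolding in_ring_def by blast
  then show "ks x \<subseteq> {1..k}" using keys_add[of b m] assms(1) m(1) by blast
qed


definition sqm :: "nat set \<Rightarrow> monom" where "sqm \<tau> = (\<Sum>i\<in>\<tau>. sg i 1)"

lemma lookup_sqm: "finite \<tau> \<Longrightarrow> lk (sqm \<tau>) i = (if i \<in> \<tau> then 1 else 0)"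
  unfolding sqm_def by (simp add: lookup_sum lookup_single when_def)

lemma keys_sqm: "finite \<tau> \<Longrightarrow> ks (sqm \<tau>) = \<tau>"
  by (auto simp: in_keys_iff lookup_sqm split: if_splits)

lemma sqfree_sqm: "sqfree_monom \<tau> = sg (sqm \<tau>) 1"
  by (simp add: sqfree_monom_def sqm_def)

definition bad :: "nat \<Rightarrow> bool list set \<Rightarrow> nat set \<Rightarrow> bool" where
  "bad k W \<tau> = (\<exists>f\<in>van_ideal k W. f \<noteq> 0 \<and> (\<forall>i. lk (lead_monom f) i \<le> lk (sqm \<tau>) i))"

lemma lemmaA: assumes "\<tau> \<subseteq> {1..k}"
  shows "(sqfree_monom \<tau> \<in> init_ideal k (van_ideal k W)) = bad k W \<tau>"
proof
  have fin: "finite \<tau>" using assms finite_subset by blast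
  assume "sqfree_monom \<tau> \<in> init_ideal k (van_ideal k W)"
  then obtain H q where H: "finite H" "H \<subseteq> {lead_term f | f. f \<in> van_ideal k W \<and> f \<noteq> 0}"
     "sg (sqm \<tau>) 1 = (\<Sum>h\<in>H. q h * h)"
    unfolding init_ideal_def gen_ideal_def sqfree_sqm by blast
  have "lk (\<Sum>h\<in>H. q h * h) (sqm \<tau>) = 1" unfolding H(3)[symmetric] by simp
  then have "(\<Sum>h\<in>H. lk (q h * h) (sqm \<tau>)) \<noteq> 0" by (simp add: lookup_sum)
  then obtain h where h: "h \<in> H" "lk (q h * h) (sqm \<tau>) \<noteq> 0"
    by (meson sum.not_neutral_contains_not_neutral)
  obtain f where f: "h = lead_term f" "f \<in> van_ideal k W" "f \<noteq> 0" using h(1) H(2) by blast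
  have "sqm \<tau> \<in> ks (q h * h)" using h(2) by (simp add: in_keys_iff)
  then obtain a b' where ab: "sqm \<tau> = a + b'" "b' \<in> ks h" using keys_mult[of "q h" h] by blast
  have "b' = lead_monom f" using ab(2) unfolding f(1) lead_term_def by (simp split: if_splits)
  then have "\<forall>i. lk (lead_monom f) i \<le> lk (sqm \<tau>) i" using ab(1) by (simp add: lookup_add)
  then show "bad k W \<tau>" unfolding bad_def using f by blast
next
  have fin: "finite \<tau>" using assms finite_subset by blast
  assume "bad k W \<tau>"
  then obtain f where f: "f \<in> van_ideal k W" "f \<noteq> 0" "\<forall>i. lk (lead_monom f) i \<le> lk (sqm \<tau>) i"
    unfolding bad_def by blast
  define M where "M = lead_monom f"
  define c where "c = lk f M"
  have c: "c \<noteq> 0" using lm_prop(1)[OF f(2)] unfolding c_def M_def by (simp add: in_keys_iff)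
  define b where "b = sqm \<tau> - M"
  have bM: "b + M = sqm \<tau>"
    by (rule poly_mapping_eqI) (use f(3) in \<open>simp add: b_def M_def lookup_add lookup_minus\<close>)
  have kb: "ks b \<subseteq> {1..k}"
  proof
    fix i assume "i \<in> ks b"
    then have "lk (sqm \<tau>) i \<noteq> 0" by (simp add: in_keys_iff b_def lookup_minus)
    then have "i \<in> \<tau>" using fin by (simp add: lookup_sqm split: if_splits)
    then show "i \<in> {1..k}" using assms by blast
  qed
  have lt: "lead_term f = sg M c" unfolding lead_term_def M_def c_def by simp
  have prod: "sg b (1/c) * lead_term f = sfm"  if "sfm = sqfree_monom \<tau>" for sfm
    unfolding lt that sqfree_sqm using c by (simp add: mult_single bM)
  have inr: "in_ring k (sg b (1/c))" unfolding in_ring_def using kb by simp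
  show "sqfree_monom \<tau> \<in> init_ideal k (van_ideal k W)"
    unfolding init_ideal_def gen_ideal_def
    apply (rule CollectI)
    apply (rule exI[of _ "{lead_term f}"])
    apply (rule exI[of _ "\<lambda>_. sg b (1/c)"])
    using f(1,2) inr prod[OF refl] by auto
qed

lemma pt_app_low: assumes "1 \<le> i" "i \<le> n - 1" "length v = n - 1" shows "pt (v @ [a]) i = pt v i"
proof -
  have "i - 1 < length v" using assms by arith
  then show ?thesis unfolding pt_def by (simp add: nth_append)
qed

lemma pt_app_last: "1 \<le> n \<Longrightarrow> length v = n - 1 \<Longrightarrow> pt (v @ [a]) n = (if a then 1 else 0)"
  unfolding pt_def by (simp add: nth_append)

lemma mon_low: assumes "ks m \<subseteq> {1..n-1}" "length v = n - 1" shows "mon m (v @ [a]) = mon m v"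
  unfolding mon_def
proof (rule prod.cong[OF refl])
  fix i assume "i \<in> ks m"
  then have "1 \<le> i" "i \<le> n - 1" using assms(1) by auto
  then show "pt (v @ [a]) i ^ lk m i = pt v i ^ lk m i" using pt_app_low assms(2) by simp
qed

lemma eval_mon: "eval_mpoly f v = (\<Sum>m\<in>ks f. lk f m * mon m v)"
  by (rule eval_superset) auto

lemma eval_low: assumes "in_ring (n-1) f" "length v = n - 1" shows "eval_mpoly f (v @ [a]) = eval_mpoly f v"
  unfolding eval_mon
proof (rule sum.cong[OF refl])
  fix m assume "m \<in> ks f"
  then have "ks m \<subseteq> {1..n-1}" using assms(1) unfolding in_ring_def by blast
  then show "lk f m * mon m (v @ [a]) = lk f m * mon m v" using mon_low assms(2) by simp
qed

lemma mon_xn: "mon (sg n k) w = pt w n ^ k"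
  unfolding mon_def by (cases "k = 0") simp_all

definition dropn :: "nat \<Rightarrow> monom \<Rightarrow> monom" where "dropn n m = Poly_Mapping.update n 0 m"

lemma lookup_dropn: "lk (dropn n m) i = (if i = n then 0 else lk m i)"
  unfolding dropn_def by (simp add: lookup_update)

lemma keys_dropn: "ks (dropn n m) = ks m - {n}"
  unfolding dropn_def by (simp add: keys_update)

definition bv :: "bool \<Rightarrow> real" where "bv a = (if a then 1 else 0)"

definition subst :: "nat \<Rightarrow> bool \<Rightarrow> mpoly \<Rightarrow> mpoly" where
  "subst n a f = (\<Sum>m\<in>ks f. sg (dropn n m) (lk f m * bv a ^ lk m n))"

lemma lookup_subst: "lk (subst n a f) \<mu> = (\<Sum>m\<in>ks f. if dropn n m = \<mu> then lk f m * bv a ^ lk m n else 0)"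
  unfolding subst_def by (simp add: lookup_sum lookup_single when_def)

lemma keys_subst: "ks (subst n a f) \<subseteq> dropn n ` ks f"
proof -
  have "ks (subst n a f) \<subseteq> (\<Union>m\<in>ks f. ks (sg (dropn n m) (lk f m * bv a ^ lk m n)))"
    unfolding subst_def by (rule keys_sum)
  also have "\<dots> \<subseteq> dropn n ` ks f" by auto
  finally show ?thesis .
qed

lemma in_ring_subst: assumes "in_ring n f" shows "in_ring (n - 1) (subst n a f)"
  unfolding in_ring_def
proof
  fix x assume "x \<in> ks (subst n a f)"
  then obtain m where m: "x = dropn n m" "m \<in> ks f" using keys_subst by blast
  have "ks m \<subseteq> {1..n}" using assms m(2) unfolding in_ring_def by blast
  then show "ks x \<subseteq> {1..n-1}" unfolding m(1) keys_dropn by auto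
qed

lemma mon_drop: assumes "1 \<le> n" "ks m \<subseteq> {1..n}" "length v = n - 1"
  shows "mon m (v @ [a]) = mon (dropn n m) v * bv a ^ lk m n"
proof -
  have ins: "{1..n} = insert n {1..n-1}" using assms(1) by auto
  have "mon m (v @ [a]) = (\<Prod>i\<in>{1..n}. pt (v @ [a]) i ^ lk m i)" using assms(2) by (intro mon_superset) auto
  also have "\<dots> = pt (v @ [a]) n ^ lk m n * (\<Prod>i\<in>{1..n-1}. pt (v @ [a]) i ^ lk m i)"
    unfolding ins by (subst prod.insert) auto
  also have "(\<Prod>i\<in>{1..n-1}. pt (v @ [a]) i ^ lk m i) = (\<Prod>i\<in>{1..n-1}. pt v i ^ lk (dropn n m) i)"
    by (rule prod.cong[OF refl]) (use assms(3) in \<open>auto simp: pt_app_low lookup_dropn\<close>)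
  also have "\<dots> = mon (dropn n m) v" using assms(2) by (intro mon_superset[symmetric]) (auto simp: keys_dropn)
  finally show ?thesis using assms by (simp add: pt_app_last bv_def)
qed

lemma eval_subst: assumes "1 \<le> n" "in_ring n f" "length v = n - 1"
  shows "eval_mpoly (subst n a f) v = eval_mpoly f (v @ [a])"
proof -
  have "eval_mpoly (subst n a f) v = (\<Sum>m\<in>ks f. lk f m * bv a ^ lk m n * mon (dropn n m) v)"
    unfolding subst_def by (simp add: eval_sum eval_single)
  also have "\<dots> = (\<Sum>m\<in>ks f. lk f m * mon m (v @ [a]))"
  proof (rule sum.cong[OF refl])
    fix m assume "m \<in> ks f"
    then have "ks m \<subseteq> {1..n}" using assms(2) unfolding in_ring_def by blast
    then show "lk f m * bv a ^ lk m n * mon (dropn n m) v = lk f m * mon m (v @ [a])"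
      using mon_drop[OF assms(1) _ assms(3)] by simp
  qed
  also have "\<dots> = eval_mpoly f (v @ [a])" by (simp add: eval_mon)
  finally show ?thesis .
qed


lemma dropn_id: "lk m n = 0 \<Longrightarrow> dropn n m = m"
  by (intro poly_mapping_eqI) (simp add: lookup_dropn)

lemma drop_lex: assumes "lex_less m \<sigma>" "lk \<sigma> n = 0" shows "lex_less (dropn n m) \<sigma>"
proof -
  obtain i where i: "lk m i < lk \<sigma> i" "\<forall>j<i. lk m j = lk \<sigma> j" using assms(1) unfolding lex_less_def by blast
  have "i \<noteq> n" using i(1) assms(2) by auto
  then show ?thesis unfolding lex_less_def using i assms(2)
    by (intro exI[of _ i]) (auto simp: lookup_dropn)
qed

lemma drop_eq_lex: assumes "dropn n m = \<sigma>" "lk \<sigma> n = 0" "m \<noteq> \<sigma>" shows "lex_less \<sigma> m"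
proof -
  have "lk m n \<noteq> 0" using assms dropn_id by metis
  moreover have "\<forall>j<n. lk \<sigma> j = lk m j" using assms(1) by (auto simp: lookup_dropn)
  ultimately show ?thesis unfolding lex_less_def using assms(2) by (intro exI[of _ n]) auto
qed

lemma subst_lm_A: assumes "f \<noteq> 0" "lk (lead_monom f) n = 0"
  shows "subst n a f \<noteq> 0" "lead_monom (subst n a f) = lead_monom f"
proof -
  let ?s = "lead_monom f"
  have s: "?s \<in> ks f" using lm_prop(1)[OF assms(1)] .
  have ds: "dropn n ?s = ?s" using assms(2) by (rule dropn_id)
  have "lk (subst n a f) ?s = (\<Sum>m\<in>ks f. if m = ?s then lk f m else 0)"
    unfolding lookup_subst
  proof (rule sum.cong[OF refl])
    fix m assume m: "m \<in> ks f"
    show "(if dropn n m = ?s then lk f m * bv a ^ lk m n else 0) = (if m = ?s then lk f m else 0)"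
    proof (cases "m = ?s")
      case True then show ?thesis using ds assms(2) by simp
    next
      case False
      have "lex_less m ?s" using lm_prop(2)[OF assms(1) m False] .
      then have "dropn n m \<noteq> ?s" using drop_eq_lex[of n m ?s] assms(2) False lex_asym by blast
      then show ?thesis using False by simp
    qed
  qed
  also have "\<dots> = lk f ?s" using s by simp
  finally have "lk (subst n a f) ?s \<noteq> 0" using s by (simp add: in_keys_iff)
  then have S: "?s \<in> ks (subst n a f)" by (simp add: in_keys_iff)
  then show "subst n a f \<noteq> 0" by auto
  show "lead_monom (subst n a f) = ?s"
  proof (rule lm_char[OF S], intro ballI impI)
    fix \<mu> assume \<mu>: "\<mu> \<in> ks (subst n a f)" "\<mu> \<noteq> ?s"
    then obtain m where m: "\<mu> = dropn n m" "m \<in> ks f" using keys_subst by blast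
    have "m \<noteq> ?s" using m(1) \<mu>(2) ds by auto
    then have "lex_less m ?s" using lm_prop(2)[OF assms(1) m(2)] by simp
    then show "lex_less \<mu> ?s" unfolding m(1) using assms(2) by (rule drop_lex)
  qed
qed

lemma subst_lm_B_keys: assumes "f \<noteq> 0" "in_ring n f" "lk (lead_monom f) n = 1"
    "\<mu> \<in> ks (subst n a f)" "\<mu> \<noteq> dropn n (lead_monom f)"
  shows "lex_less \<mu> (dropn n (lead_monom f))"
proof -
  let ?s = "lead_monom f"
  let ?s' = "dropn n ?s"
  obtain m where m: "\<mu> = dropn n m" "m \<in> ks f" using keys_subst assms(4) by blast
  have "m \<noteq> ?s" using m(1) assms(5) by auto
  then have "lex_less m ?s" using lm_prop(2)[OF assms(1) m(2)] by simp
  then obtain i where i: "lk m i < lk ?s i" "\<forall>j<i. lk m j = lk ?s j" unfolding lex_less_def by blast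
  have sk: "ks ?s \<subseteq> {1..n}" using assms(2) lm_prop(1)[OF assms(1)] unfolding in_ring_def by blast
  have mk: "ks m \<subseteq> {1..n}" using assms(2) m(2) unfolding in_ring_def by blast
  consider "i < n" | "i = n" | "i > n" by linarith
  then show ?thesis
  proof cases
    case 1
    then show ?thesis unfolding lex_less_def m(1) using i
      by (intro exI[of _ i]) (auto simp: lookup_dropn)
  next
    case 2
    have "m = ?s'"
    proof (rule poly_mapping_eqI)
      fix j
      consider "j < n" | "j = n" | "j > n" by linarith
      then show "lk m j = lk ?s' j"
      proof cases
        case 1 then show ?thesis using i 2 by (simp add: lookup_dropn)
      next
        case 2 then show ?thesis using i `i = n` assms(3) by (simp add: lookup_dropn)
      next
        case 3
        have "j \<notin> ks m" "j \<notin> ks ?s" using mk sk 3 by auto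
        then show ?thesis using 3 by (simp add: lookup_dropn in_keys_iff)
      qed
    qed
    then have "\<mu> = ?s'" using m(1) dropn_id[of ?s' n] by (simp add: lookup_dropn)
    then show ?thesis using assms(5) by simp
  next
    case 3
    have "i \<notin> ks ?s" using sk 3 by auto
    then show ?thesis using i(1) by (simp add: in_keys_iff)
  qed
qed

lemma subst_lm_B_coeff: assumes "f \<noteq> 0" "lk (lead_monom f) n = 1"
  shows "lk (subst n a f) (dropn n (lead_monom f)) = lk f (dropn n (lead_monom f)) + lk f (lead_monom f) * bv a"
proof -
  let ?s = "lead_monom f"
  let ?s' = "dropn n ?s"
  have s: "?s \<in> ks f" using lm_prop(1)[OF assms(1)] .
  have ss: "?s \<noteq> ?s'" using assms(2) by (metis lookup_dropn zero_neq_one)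
  have s'n: "lk ?s' n = 0" by (simp add: lookup_dropn)
  have "lk (subst n a f) ?s' = (\<Sum>m\<in>ks f. (if m = ?s then lk f ?s * bv a else 0) + (if m = ?s' then lk f ?s' else 0))"
    unfolding lookup_subst
  proof (rule sum.cong[OF refl])
    fix m assume m: "m \<in> ks f"
    show "(if dropn n m = ?s' then lk f m * bv a ^ lk m n else 0) = (if m = ?s then lk f ?s * bv a else 0) + (if m = ?s' then lk f ?s' else 0)"
    proof (cases "m = ?s")
      case True then show ?thesis using ss assms(2) by simp
    next
      case False
      note F = False
      show ?thesis
      proof (cases "m = ?s'")
        case True then show ?thesis using F s'n dropn_id[OF s'n] by simp
      next
        case False
        have "dropn n m \<noteq> ?s'"
        proof
          assume d: "dropn n m = ?s'"
          have "lk m n \<noteq> 0" using d False dropn_id by metis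
          moreover have "lk m n \<noteq> 1"
          proof
            assume "lk m n = 1"
            then have "m = ?s" using d assms(2)
              by (intro poly_mapping_eqI) (metis lookup_dropn)
            then show False using F by simp
          qed
          ultimately have "lk ?s n < lk m n" using assms(2) by simp
          moreover have "\<forall>j<n. lk ?s j = lk m j" using d by (metis lookup_dropn less_irrefl)
          ultimately have "lex_less ?s m" unfolding lex_less_def by blast
          moreover have "lex_less m ?s" using lm_prop(2)[OF assms(1) m F] .
          ultimately show False using lex_asym by blast
        qed
        then show ?thesis using F False by simp
      qed
    qed
  qed
  also have "\<dots> = lk f ?s * bv a + lk f ?s'"
    using s by (simp add: sum.distrib in_keys_iff)
  finally show ?thesis by simp
qed

lemma van_restr: assumes "W \<subseteq> {v. length v = n}" "v \<in> restr W a" shows "length v = n - 1"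
  using assms unfolding restr_def by auto

lemma L1_fwd: assumes "1 \<le> n" "W \<subseteq> {v. length v = n}" "g \<in> van_ideal n W" "g \<noteq> 0"
   "lk (lead_monom g) n = 0" "\<forall>i. lk (lead_monom g) i \<le> lk (sqm \<tau>) i"
  shows "bad (n - 1) (restr W a) \<tau>"
proof -
  have gr: "in_ring n g" using assms(3) unfolding van_ideal_def by blast
  have "subst n a g \<in> van_ideal (n - 1) (restr W a)"
    unfolding van_ideal_def
  proof (intro CollectI conjI ballI)
    show "in_ring (n - 1) (subst n a g)" using gr by (rule in_ring_subst)
    fix v assume v: "v \<in> restr W a"
    have "length v = n - 1" using van_restr[OF assms(2) v] .
    then have "eval_mpoly (subst n a g) v = eval_mpoly g (v @ [a])" using eval_subst assms(1) gr by blast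
    also have "\<dots> = 0" using assms(3) v unfolding van_ideal_def restr_def by blast
    finally show "eval_mpoly (subst n a g) v = 0" .
  qed
  then show ?thesis unfolding bad_def using subst_lm_A[OF assms(4,5), of a] assms(6) by auto
qed


lemma lookup_sqm_insert: "finite \<tau> \<Longrightarrow> i \<noteq> n \<Longrightarrow> lk (sqm (insert n \<tau>)) i = lk (sqm \<tau>) i"
  by (simp add: lookup_sqm)

lemma L2_fwd: assumes "1 \<le> n" "W \<subseteq> {v. length v = n}" "\<tau> \<subseteq> {1..n-1}" "bad n W (insert n \<tau>)"
  shows "bad (n - 1) (restr W False) \<tau> \<or> bad (n - 1) (restr W True) \<tau>"
proof -
  have fin: "finite \<tau>" using assms(3) finite_subset by blast
  have nt: "n \<notin> \<tau>" using assms(1,3) by auto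
  obtain g where g: "g \<in> van_ideal n W" "g \<noteq> 0" "\<forall>i. lk (lead_monom g) i \<le> lk (sqm (insert n \<tau>)) i"
    using assms(4) unfolding bad_def by blast
  have gr: "in_ring n g" using g(1) unfolding van_ideal_def by blast
  let ?s = "lead_monom g"
  let ?s' = "dropn n ?s"
  have "lk ?s n \<le> 1" using g(3)[rule_format, of n] fin by (simp add: lookup_sqm)
  then consider "lk ?s n = 0" | "lk ?s n = 1" by linarith
  then show ?thesis
  proof cases
    case 1
    have "\<forall>i. lk ?s i \<le> lk (sqm \<tau>) i"
    proof
      fix i show "lk ?s i \<le> lk (sqm \<tau>) i"
        using g(3)[rule_format, of i] 1 lookup_sqm_insert[OF fin, of i n] by (cases "i = n") auto
    qed
    then show ?thesis using L1_fwd[OF assms(1,2) g(1,2) 1] by blast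
  next
    case 2
    have le: "\<forall>i. lk ?s' i \<le> lk (sqm \<tau>) i"
    proof
      fix i show "lk ?s' i \<le> lk (sqm \<tau>) i"
        using g(3)[rule_format, of i] lookup_sqm_insert[OF fin, of i n] by (cases "i = n") (auto simp: lookup_dropn)
    qed
    have vanS: "subst n a g \<in> van_ideal (n - 1) (restr W a)" for a
      unfolding van_ideal_def
    proof (intro CollectI conjI ballI)
      show "in_ring (n - 1) (subst n a g)" using gr by (rule in_ring_subst)
      fix v assume v: "v \<in> restr W a"
      have "length v = n - 1" using van_restr[OF assms(2) v] .
      then have "eval_mpoly (subst n a g) v = eval_mpoly g (v @ [a])" using eval_subst assms(1) gr by blast
      also have "\<dots> = 0" using g(1) v unfolding van_ideal_def restr_def by blast
      finally show "eval_mpoly (subst n a g) v = 0" .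
    qed
    have lmS: "lead_monom (subst n a g) = ?s'" if "lk (subst n a g) ?s' \<noteq> 0" for a
    proof -
      have S: "?s' \<in> ks (subst n a g)" using that by (simp add: in_keys_iff)
      show ?thesis
        by (rule lm_char[OF S]) (use subst_lm_B_keys[OF g(2) gr 2] in blast)
    qed
    have c: "lk g ?s \<noteq> 0" using lm_prop(1)[OF g(2)] by (simp add: in_keys_iff)
    show ?thesis
    proof (cases "lk g ?s' = 0")
      case True
      have "lk (subst n True g) ?s' \<noteq> 0" using subst_lm_B_coeff[OF g(2) 2, of True] True c by (simp add: bv_def)
      then have "subst n True g \<noteq> 0" "lead_monom (subst n True g) = ?s'" using lmS by auto
      then have "bad (n - 1) (restr W True) \<tau>" unfolding bad_def using vanS[of True] le by auto
      then show ?thesis by blast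
    next
      case False
      have "lk (subst n False g) ?s' \<noteq> 0" using subst_lm_B_coeff[OF g(2) 2, of False] False by (simp add: bv_def)
      then have "subst n False g \<noteq> 0" "lead_monom (subst n False g) = ?s'" using lmS by auto
      then have "bad (n - 1) (restr W False) \<tau>" unfolding bad_def using vanS[of False] le by auto
      then show ?thesis by blast
    qed
  qed
qed

lemma sub_sqm: assumes "finite \<tau>" "\<forall>i. lk \<sigma> i \<le> lk (sqm \<tau>) i"
  shows "(sqm \<tau> - \<sigma>) + \<sigma> = sqm \<tau>" "ks (sqm \<tau> - \<sigma>) \<subseteq> \<tau>"
proof -
  show "(sqm \<tau> - \<sigma>) + \<sigma> = sqm \<tau>"
    by (rule poly_mapping_eqI) (use assms(2) in \<open>simp add: lookup_add lookup_minus\<close>)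
  show "ks (sqm \<tau> - \<sigma>) \<subseteq> \<tau>"
  proof
    fix i assume "i \<in> ks (sqm \<tau> - \<sigma>)"
    then have "lk (sqm \<tau>) i \<noteq> 0" by (simp add: in_keys_iff lookup_minus)
    then show "i \<in> \<tau>" using assms(1) by (simp add: lookup_sqm split: if_splits)
  qed
qed

lemma normalize: assumes "bad k W \<tau>" "\<tau> \<subseteq> {1..k}"
  shows "\<exists>f\<in>van_ideal k W. f \<noteq> 0 \<and> lead_monom f = sqm \<tau> \<and> lk f (sqm \<tau>) = 1"
proof -
  have fin: "finite \<tau>" using assms(2) finite_subset by blast
  obtain f where f: "f \<in> van_ideal k W" "f \<noteq> 0" "\<forall>i. lk (lead_monom f) i \<le> lk (sqm \<tau>) i"
    using assms(1) unfolding bad_def by blast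
  define \<sigma> where "\<sigma> = lead_monom f"
  define c where "c = lk f \<sigma>"
  have c: "c \<noteq> 0" using lm_prop(1)[OF f(2)] unfolding c_def \<sigma>_def by (simp add: in_keys_iff)
  define b where "b = sqm \<tau> - \<sigma>"
  have bs: "b + \<sigma> = sqm \<tau>" "ks b \<subseteq> \<tau>" using sub_sqm[OF fin f(3)] unfolding b_def \<sigma>_def by auto
  define f' where "f' = sg b (1/c) * f"
  have "f' \<noteq> 0" "lead_monom f' = b + \<sigma>" using lm_mult_single[of "1/c" f b] c f(2) unfolding f'_def \<sigma>_def by auto
  moreover have "lk f' (sqm \<tau>) = 1" unfolding f'_def bs(1)[symmetric] lookup_mult_single c_def
    using c unfolding c_def by simp
  moreover have "f' \<in> van_ideal k W"
    using f(1) in_ring_mult_single[of b k f "1/c"] bs(2) assms(2)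
    unfolding van_ideal_def f'_def by (auto simp: eval_mult_single)
  ultimately show ?thesis using bs(1) by auto
qed

lemma split_pt: assumes "length w = n" "1 \<le> n"
  obtains v a where "w = v @ [a]" "length v = n - 1"
proof -
  have "w \<noteq> []" using assms by auto
  then have "w = butlast w @ [last w]" by simp
  then show ?thesis using that assms by (metis length_butlast)
qed

lemma L1_bwd: assumes "1 \<le> n" "W \<subseteq> {v. length v = n}" "\<tau> \<subseteq> {1..n-1}"
  "bad (n - 1) (restr W False) \<tau>" "bad (n - 1) (restr W True) \<tau>"
  shows "bad n W \<tau>"
proof -
  have fin: "finite \<tau>" using assms(3) finite_subset by blast
  obtain f0 where f0: "f0 \<in> van_ideal (n-1) (restr W False)" "f0 \<noteq> 0" "lead_monom f0 = sqm \<tau>" "lk f0 (sqm \<tau>) = 1"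
    using normalize[OF assms(4,3)] by blast
  obtain f1 where f1: "f1 \<in> van_ideal (n-1) (restr W True)" "f1 \<noteq> 0" "lead_monom f1 = sqm \<tau>" "lk f1 (sqm \<tau>) = 1"
    using normalize[OF assms(5,3)] by blast
  have r0: "in_ring (n-1) f0" and r1: "in_ring (n-1) f1" using f0(1) f1(1) unfolding van_ideal_def by auto
  define d where "d = f1 - f0"
  define e :: mpoly where "e = sg (sg n 1) 1"
  define g where "g = f0 + e * d"
  have dk: "lk d (sqm \<tau>) = 0" unfolding d_def using f0(4) f1(4) by (simp add: lookup_minus)
  have low: "lex_less \<mu> (sqm \<tau>)" if mu: "\<mu> \<in> ks (e * d)" for \<mu>
  proof -
    obtain \<rho> where \<rho>: "\<mu> = sg n 1 + \<rho>" "\<rho> \<in> ks d" using mu keys_mult_single unfolding e_def by blast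
    have "\<rho> \<noteq> sqm \<tau>" using \<rho>(2) dk by (auto simp: in_keys_iff)
    moreover have "\<rho> \<in> ks f0 \<or> \<rho> \<in> ks f1" using \<rho>(2) keys_diff[of f1 f0] unfolding d_def by blast
    ultimately have "lex_less \<rho> (sqm \<tau>)" using lm_prop(2)[OF f0(2)] lm_prop(2)[OF f1(2)] f0(3) f1(3) by metis
    then obtain i where i: "lk \<rho> i < lk (sqm \<tau>) i" "\<forall>j<i. lk \<rho> j = lk (sqm \<tau>) j" unfolding lex_less_def by blast
    have "i \<in> \<tau>" using i(1) fin by (simp add: lookup_sqm split: if_splits)
    then have "i \<in> {1..n-1}" using assms(3) by blast
    then have "i < n" by auto
    then show ?thesis unfolding lex_less_def \<rho>(1) using i
      by (intro exI[of _ i]) (auto simp: lookup_add lookup_single)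
  qed
  have "g \<noteq> 0" "lead_monom g = sqm \<tau>" unfolding g_def using lm_add_lower[OF f0(2)] low f0(3) by auto
  moreover have "g \<in> van_ideal n W"
    unfolding van_ideal_def
  proof (intro CollectI conjI ballI)
    have "in_ring n f0" "in_ring n f1" using r0 r1 in_ring_mono[of "n-1" n] by auto
    then show "in_ring n g" unfolding g_def d_def e_def
      using assms(1) by (intro in_ring_add in_ring_mult_single in_ring_diff) auto
    fix w assume w: "w \<in> W"
    then have "length w = n" using assms(2) by auto
    then obtain v a where va: "w = v @ [a]" "length v = n - 1" using split_pt assms(1) by blast
    have ev: "eval_mpoly g w = eval_mpoly f0 v + bv a * (eval_mpoly f1 v - eval_mpoly f0 v)"
      unfolding g_def d_def e_def va(1)
      using eval_low[OF r0 va(2)] eval_low[OF r1 va(2)] pt_app_last[OF assms(1) va(2)]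
      by (simp add: eval_add eval_diff eval_mult_single mon_xn bv_def)
    show "eval_mpoly g w = 0"
    proof (cases a)
      case True
      then have "v \<in> restr W True" using w va(1) unfolding restr_def by simp
      then have "eval_mpoly f1 v = 0" using f1(1) unfolding van_ideal_def by blast
      then show ?thesis using ev True by (simp add: bv_def)
    next
      case False
      then have "v \<in> restr W False" using w va(1) unfolding restr_def by simp
      then have "eval_mpoly f0 v = 0" using f0(1) unfolding van_ideal_def by blast
      then show ?thesis using ev False by (simp add: bv_def)
    qed
  qed
  ultimately show ?thesis unfolding bad_def by auto
qed

lemma L2_bwd: assumes "1 \<le> n" "W \<subseteq> {v. length v = n}" "\<tau> \<subseteq> {1..n-1}"
  "bad (n - 1) (restr W a) \<tau>"
  shows "bad n W (insert n \<tau>)"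
proof -
  have fin: "finite \<tau>" using assms(3) finite_subset by blast
  obtain f where f: "f \<in> van_ideal (n-1) (restr W a)" "f \<noteq> 0" "\<forall>i. lk (lead_monom f) i \<le> lk (sqm \<tau>) i"
    using assms(4) unfolding bad_def by blast
  have r: "in_ring (n-1) f" using f(1) unfolding van_ideal_def by auto
  have rn: "in_ring n f" using r in_ring_mono[of "n-1" n] by auto
  let ?s = "lead_monom f"
  define e :: mpoly where "e = sg (sg n 1) 1"
  have ef: "e * f \<noteq> 0" "lead_monom (e * f) = sg n 1 + ?s" unfolding e_def using lm_mult_single[of 1 f "sg n 1"] f(2) by auto
  have sn: "lk ?s n = 0"
  proof -
    have "ks ?s \<subseteq> {1..n-1}" using r lm_prop(1)[OF f(2)] unfolding in_ring_def by blast
    then have "n \<notin> ks ?s" using assms(1) by auto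
    then show ?thesis by (simp add: in_keys_iff)
  qed
  define g where "g = (if a then e * f else e * f + (- f))"
  have gl: "g \<noteq> 0 \<and> lead_monom g = sg n 1 + ?s"
  proof (cases a)
    case True then show ?thesis using ef unfolding g_def by simp
  next
    case False
    have ss: "lex_less ?s (sg n 1 + ?s)" unfolding lex_less_def using sn
      by (intro exI[of _ n]) (auto simp: lookup_add lookup_single)
    have H: "lex_less m (lead_monom (e * f))" if "m \<in> ks (- f)" for m
    proof -
      have m: "m \<in> ks f" using that by simp
      show ?thesis
      proof (cases "m = ?s")
        case True then show ?thesis using ss ef(2) by simp
      next
        case False
        then have "lex_less m ?s" using lm_prop(2)[OF f(2) m] by simp
        then show ?thesis using ss ef(2) lex_trans by metis
      qed
    qed
    have A: "e * f + (- f) \<noteq> 0" and B: "lead_monom (e * f + (- f)) = lead_monom (e * f)"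
      using lm_add_lower[OF ef(1), of "- f"] H by auto
    show ?thesis using A B ef(2) False unfolding g_def by simp
  qed
  have "g \<in> van_ideal n W"
    unfolding van_ideal_def
  proof (intro CollectI conjI ballI)
    have "in_ring n (e * f)" unfolding e_def using assms(1) rn by (intro in_ring_mult_single) auto
    moreover have "in_ring n (- f)" using rn unfolding in_ring_def by simp
    ultimately show "in_ring n g" unfolding g_def using rn by (auto intro: in_ring_add in_ring_diff)
    fix w assume w: "w \<in> W"
    then have "length w = n" using assms(2) by auto
    then obtain v a' where va: "w = v @ [a']" "length v = n - 1" using split_pt assms(1) by blast
    have v: "v \<in> restr W a'" using w va(1) unfolding restr_def by simp
    have eef: "eval_mpoly (e * f) w = bv a' * eval_mpoly f v"
      unfolding e_def va(1) using eval_low[OF r va(2)] pt_app_last[OF assms(1) va(2)]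
      by (simp add: eval_mult_single mon_xn bv_def)
    have emf: "eval_mpoly (- f) w = - eval_mpoly f v"
      using eval_diff[of 0 f w] eval_low[OF r va(2)] unfolding va(1) by (simp add: eval_zero)
    have efw: "eval_mpoly f w = eval_mpoly f v" using eval_low[OF r va(2)] va(1) by simp
    show "eval_mpoly g w = 0"
    proof (cases a)
      case True
      show ?thesis
      proof (cases a')
        case True
        then have "v \<in> restr W a" using v `a` by simp
        then have "eval_mpoly f v = 0" using f(1) unfolding van_ideal_def by blast
        then show ?thesis using eef `a` unfolding g_def by simp
      next
        case False then show ?thesis using eef `a` unfolding g_def by (simp add: bv_def)
      qed
    next
      case False
      show ?thesis
      proof (cases a')
        case True
        then show ?thesis using eef emf `\<not> a` unfolding g_def by (simp add: eval_add eval_diff bv_def efw)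
      next
        case False
        then have "v \<in> restr W a" using v `\<not> a` by simp
        then have "eval_mpoly f v = 0" using f(1) unfolding van_ideal_def by blast
        then show ?thesis using eef emf `\<not> a` unfolding g_def by (simp add: eval_add eval_diff efw)
      qed
    qed
  qed
  moreover have "\<forall>i. lk (lead_monom g) i \<le> lk (sqm (insert n \<tau>)) i"
  proof
    fix i
    show "lk (lead_monom g) i \<le> lk (sqm (insert n \<tau>)) i"
    proof (cases "i = n")
      case True then show ?thesis using gl sn fin by (simp add: lookup_add lookup_sqm)
    next
      case False then show ?thesis using gl f(3)[rule_format, of i] lookup_sqm_insert[OF fin False]
        by (simp add: lookup_add lookup_single)
    qed
  qed
  ultimately show ?thesis unfolding bad_def using gl by auto
qed


lemma L1_fwd': assumes "1 \<le> n" "W \<subseteq> {v. length v = n}" "\<tau> \<subseteq> {1..n-1}" "bad n W \<tau>"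
  shows "bad (n - 1) (restr W a) \<tau>"
proof -
  have fin: "finite \<tau>" using assms(3) finite_subset by blast
  have nt: "n \<notin> \<tau>" using assms(1,3) by auto
  obtain g where g: "g \<in> van_ideal n W" "g \<noteq> 0" "\<forall>i. lk (lead_monom g) i \<le> lk (sqm \<tau>) i"
    using assms(4) unfolding bad_def by blast
  have "lk (lead_monom g) n = 0" using g(3)[rule_format, of n] fin nt by (simp add: lookup_sqm)
  then show ?thesis using L1_fwd[OF assms(1,2) g(1,2) _ g(3)] by blast
qed

lemma sub_helper: assumes "(n::nat) \<notin> A" shows "(A \<subseteq> {1..n}) = (A \<subseteq> {1..n-1})"
proof
  assume A: "A \<subseteq> {1..n}"
  show "A \<subseteq> {1..n-1}"
  proof
    fix x assume "x \<in> A"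
    then have "x \<noteq> n" "x \<in> {1..n}" using A assms by auto
    then show "x \<in> {1..n-1}" by auto
  qed
next
  assume "A \<subseteq> {1..n-1}"
  moreover have "{1..n-1} \<subseteq> {1..n}" by auto
  ultimately show "A \<subseteq> {1..n}" by (rule subset_trans)
qed

lemma S_lex_bad: "\<tau> \<in> S_lex k W \<longleftrightarrow> \<tau> \<subseteq> {1..k} \<and> \<not> bad k W \<tau>"
  unfolding S_lex_def using lemmaA by blast

theorem lemma3p1:
  fixes n :: nat and V :: "bool list set"
  assumes "n \<ge> 1"
    and "V \<subseteq> {v. length v = n}"
    and "V \<noteq> {}"
  shows "S_lex n V = S_lex (n - 1) (restr V False) \<union> S_lex (n - 1) (restr V True)
           \<union> cone n (S_lex (n - 1) (restr V False) \<inter> S_lex (n - 1) (restr V True))"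
proof (rule set_eqI)
  let ?S0 = "S_lex (n - 1) (restr V False)"
  let ?S1 = "S_lex (n - 1) (restr V True)"
  fix \<tau>
  have m0: "\<And>\<tau>. \<tau> \<in> ?S0 \<longleftrightarrow> \<tau> \<subseteq> {1..n-1} \<and> \<not> bad (n-1) (restr V False) \<tau>" by (rule S_lex_bad)
  have m1: "\<And>\<tau>. \<tau> \<in> ?S1 \<longleftrightarrow> \<tau> \<subseteq> {1..n-1} \<and> \<not> bad (n-1) (restr V True) \<tau>" by (rule S_lex_bad)
  have mn: "\<tau> \<in> S_lex n V \<longleftrightarrow> \<tau> \<subseteq> {1..n} \<and> \<not> bad n V \<tau>" by (rule S_lex_bad)
  show "\<tau> \<in> S_lex n V \<longleftrightarrow> \<tau> \<in> ?S0 \<union> ?S1 \<union> cone n (?S0 \<inter> ?S1)"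
  proof (cases "n \<in> \<tau>")
    case False
    have sub: "\<tau> \<subseteq> {1..n} \<longleftrightarrow> \<tau> \<subseteq> {1..n-1}" using False by (rule sub_helper)
    have cone: "\<tau> \<in> cone n (?S0 \<inter> ?S1) \<longleftrightarrow> \<tau> \<in> ?S0 \<inter> ?S1" using False unfolding cone_def by auto
    show ?thesis
    proof (cases "\<tau> \<subseteq> {1..n-1}")
      case True
      have "bad n V \<tau> \<longleftrightarrow> bad (n-1) (restr V False) \<tau> \<and> bad (n-1) (restr V True) \<tau>"
        using L1_fwd'[OF assms(1,2) True] L1_bwd[OF assms(1,2) True] by blast
      then show ?thesis using cone sub True m0[of \<tau>] m1[of \<tau>] mn by blast
    next
      case False
      then show ?thesis using cone sub m0[of \<tau>] m1[of \<tau>] mn by blast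
    qed
  next
    case True
    define \<tau>' where "\<tau>' = \<tau> - {n}"
    have t: "\<tau> = insert n \<tau>'" "n \<notin> \<tau>'" using True unfolding \<tau>'_def by auto
    have n01: "\<tau> \<notin> ?S0" "\<tau> \<notin> ?S1" using True assms(1) unfolding S_lex_bad by auto
    have cone: "\<tau> \<in> cone n (?S0 \<inter> ?S1) \<longleftrightarrow> \<tau>' \<in> ?S0 \<inter> ?S1"
    proof
      assume "\<tau> \<in> cone n (?S0 \<inter> ?S1)"
      then consider "\<tau> \<in> ?S0 \<inter> ?S1" | \<sigma> where "\<tau> = \<sigma> \<union> {n}" "\<sigma> \<in> ?S0 \<inter> ?S1"
        unfolding cone_def by blast
      then show "\<tau>' \<in> ?S0 \<inter> ?S1"
      proof cases
        case 1 then show ?thesis using n01 by blast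
      next
        case 2
        have "\<sigma> \<subseteq> {1..n-1}" using 2(2) m0[of \<sigma>] by blast
        then have "n \<notin> \<sigma>" using assms(1) by auto
        then have "\<sigma> = \<tau>'" using 2(1) unfolding \<tau>'_def by auto
        then show ?thesis using 2(2) by simp
      qed
    next
      assume "\<tau>' \<in> ?S0 \<inter> ?S1"
      then show "\<tau> \<in> cone n (?S0 \<inter> ?S1)" unfolding cone_def using t(1) by blast
    qed
    have "n \<in> {1..n}" using assms(1) by auto
    then have "\<tau> \<subseteq> {1..n} \<longleftrightarrow> \<tau>' \<subseteq> {1..n}" using t(1) by blast
    then have sub: "\<tau> \<subseteq> {1..n} \<longleftrightarrow> \<tau>' \<subseteq> {1..n-1}" using sub_helper[OF t(2)] by simp
    show ?thesis
    proof (cases "\<tau>' \<subseteq> {1..n-1}")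
      case True
      have "bad n V \<tau> \<longleftrightarrow> bad (n-1) (restr V False) \<tau>' \<or> bad (n-1) (restr V True) \<tau>'"
        unfolding t(1) using L2_fwd[OF assms(1,2) True] L2_bwd[OF assms(1,2) True] by blast
      then show ?thesis using cone sub True n01 m0[of \<tau>'] m1[of \<tau>'] mn by blast
    next
      case False
      then show ?thesis using cone sub n01 m0[of \<tau>'] m1[of \<tau>'] mn by blast
    qed
  qed
qed

end
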